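(* Let $\sigma$ be a proper partial action of a locally compact Hausdorff group $G$ on a locally compact Hausdorff space $X$. Then the closure $E_\sigma$ of $C_c(X)$ in $E_{\sigma^e}$ equals the closure in $E_{\sigma^e}$ of $E^0_\sigma:=C_c(X^e)\cap C_0(X)$.
   Context: A topological partial action $\sigma=(\{X_t\},\{\sigma_t\})$: open $X_t\subseteq X$, homeomorphisms $\sigma_t\colon X_{t^{-1}}\to X_t$, $X_e=X$, $\sigma_e=\mathrm{id}$, $\sigma_s(X_{s^{-1}}\cap X_t)=X_s\cap X_{st}$, $\sigma_s\sigma_t=\sigma_{st}$ on $X_{t^{-1}}\cap X_{t^{-1}s^{-1}}$, $\Gamma_\sigma=\{(t,x):x\in X_{t^{-1}}\}$ open and $(t,x)\mapsto\sigma_t(x)$ continuous; proper means $(t,x)\mapsto(\sigma_t(x),x)$, $\Gamma_\sigma\to X\times X$, is proper. The enveloping action $\sigma^e$ on $X^e$ is the global action with $X$ open in $X^e$, $X_t=X\cap\sigma^e_t(X)$, $\sigma_t=\sigma^e_t|_{X_{t^{-1}}}$, $X^e=\bigcup_t\sigma^e_t(X)$; for proper $\sigma$, $X^e$ is locally compact Hausdorff and $\sigma^e$ is proper. $C_0(X)$ is viewed as an ideal of $C_0(X^e)$ (extension by zero), so $C_c(X)\subseteq C_c(X^e)\cap C_0(X)$. $X/\sigma\cong X^e/\sigma^e$ denotes the orbit space. $E_{\sigma^e}$ is the completion of $C_c(X^e)$ as a left Hilbert $C_0(X/\sigma)$-module with $(fg)(x)=f([x])g(x)$ and $\langle g,h\rangle([x])=\int_G(g\bar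 h)(\sigma^e_{t^{-1}}(x))\,dt$ (Haar measure $dt$). *)

theory Defs
  imports "HOL-Analysis.Analysis"
begin

definition lch_group :: "('g::topological_space \<Rightarrow> 'g \<Rightarrow> 'g) \<Rightarrow> ('g \<Rightarrow> 'g) \<Rightarrow> 'g \<Rightarrow> bool" where
  "lch_group mul ginv e \<longleftrightarrow>
     (\<forall>a b c. mul (mul a b) c = mul a (mul b c)) \<and>
     (\<forall>a. mul e a = a \<and> mul a e = a) \<and>
     (\<forall>a. mul (ginv a) a = e \<and> mul a (ginv a) = e) \<and>
     continuous_on UNIV (\<lambda>(a, b). mul a b) \<and> continuous_on UNIV ginv \<and>
     Hausdorff_space (euclidean :: 'g topology) \<and> locally_compact_space (euclidean :: 'g topology)"

definition left_haar_measure :: "('g::topological_space \<Rightarrow> 'g \<Rightarrow> 'g) \<Rightarrow> 'g measure \<Rightarrow> bool" where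
  "left_haar_measure mul \<mu> \<longleftrightarrow>
     sets \<mu> = sets borel \<and>
     (\<forall>g A. A \<in> sets borel \<longrightarrow> emeasure \<mu> (mul g ` A) = emeasure \<mu> A) \<and>
     (\<forall>K. compact K \<longrightarrow> emeasure \<mu> K < \<infinity>) \<and>
     (\<forall>U. open U \<and> U \<noteq> {} \<longrightarrow> emeasure \<mu> U > 0) \<and>
     (\<forall>A \<in> sets borel. emeasure \<mu> A = (INF U \<in> {U. open U \<and> A \<subseteq> U}. emeasure \<mu> U)) \<and>
     (\<forall>U. open U \<longrightarrow> emeasure \<mu> U = (SUP K \<in> {K. compact K \<and> K \<subseteq> U}. emeasure \<mu> K))"

definition global_action ::
  "('g::topological_space \<Rightarrow> 'g \<Rightarrow> 'g) \<Rightarrow> 'g \<Rightarrow> ('g \<Rightarrow> 'b::topological_space \<Rightarrow> 'b) \<Rightarrow> bool" where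
  "global_action mul e act \<longleftrightarrow>
     (\<forall>x. act e x = x) \<and> (\<forall>s t x. act (mul s t) x = act s (act t x)) \<and>
     continuous_on UNIV (\<lambda>(t, x). act t x)"

text \<open>The partial action obtained by restricting a global action to an open set X:
  domains X_t = X \<inter> act t ` X, maps the restrictions of act t.\<close>
definition pdom :: "('g \<Rightarrow> 'b \<Rightarrow> 'b) \<Rightarrow> 'b set \<Rightarrow> 'g \<Rightarrow> 'b set" where
  "pdom act X t = X \<inter> act t ` X"

definition pgraph :: "('g \<Rightarrow> 'g) \<Rightarrow> ('g \<Rightarrow> 'b \<Rightarrow> 'b) \<Rightarrow> 'b set \<Rightarrow> ('g \<times> 'b) set" where
  "pgraph ginv act X = {(t, x). x \<in> pdom act X (ginv t)}"

definition proper_partial :: "('g::topological_space \<Rightarrow> 'g) \<Rightarrow> ('g \<Rightarrow> 'b::topological_space \<Rightarrow> 'b) \<Rightarrow> 'b set \<Rightarrow> bool" where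
  "proper_partial ginv act X \<longleftrightarrow>
     (\<forall>K. compact K \<and> K \<subseteq> X \<times> X \<longrightarrow>
        compact {(t, x) \<in> pgraph ginv act X. (act t x, x) \<in> K})"

definition ext_zero :: "'b set \<Rightarrow> ('b \<Rightarrow> complex) \<Rightarrow> 'b \<Rightarrow> complex" where
  "ext_zero X f y = (if y \<in> X then f y else 0)"

definition Cc_on :: "'b::topological_space set \<Rightarrow> ('b \<Rightarrow> complex) set" where
  "Cc_on X = {f. continuous_on X f \<and> (\<exists>K. compact K \<and> K \<subseteq> X \<and> (\<forall>x \<in> X - K. f x = 0))}"

definition C0_on :: "'b::topological_space set \<Rightarrow> ('b \<Rightarrow> complex) set" where
  "C0_on X = {f. continuous_on X f \<and>
     (\<forall>\<epsilon>>0. \<exists>K. compact K \<and> K \<subseteq> X \<and> (\<forall>x \<in> X - K. cmod (f x) < \<epsilon>))}"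

text \<open>The C_0(X/sigma)-valued inner product of E_{sigma^e}, evaluated at the orbit of x.\<close>
definition E_inner :: "'g measure \<Rightarrow> ('g \<Rightarrow> 'g) \<Rightarrow> ('g \<Rightarrow> 'b \<Rightarrow> 'b) \<Rightarrow>
    ('b \<Rightarrow> complex) \<Rightarrow> ('b \<Rightarrow> complex) \<Rightarrow> 'b \<Rightarrow> complex" where
  "E_inner \<mu> ginv act g h x = (\<integral>t. g (act (ginv t) x) * cnj (h (act (ginv t) x)) \<partial>\<mu>)"

definition E_norm :: "'g measure \<Rightarrow> ('g \<Rightarrow> 'g) \<Rightarrow> ('g \<Rightarrow> 'b \<Rightarrow> 'b) \<Rightarrow> ('b \<Rightarrow> complex) \<Rightarrow> real" where
  "E_norm \<mu> ginv act g = sqrt (SUP x. cmod (E_inner \<mu> ginv act g g x))"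

text \<open>Closure in E_{sigma^e} of a subset S of C_c(X^e), intersected with the dense
  subspace C_c(X^e).  For S1, S2 \<subseteq> C_c(X^e), the closures in the completion agree
  iff these relative closures agree.\<close>
definition E_closure :: "'g measure \<Rightarrow> ('g \<Rightarrow> 'g) \<Rightarrow> ('g \<Rightarrow> 'b::topological_space \<Rightarrow> 'b) \<Rightarrow>
    ('b \<Rightarrow> complex) set \<Rightarrow> ('b \<Rightarrow> complex) set" where
  "E_closure \<mu> ginv act S = {g \<in> Cc_on UNIV. \<forall>\<epsilon>>0. \<exists>f \<in> S. E_norm \<mu> ginv act (g - f) < \<epsilon>}"

end

theory Submission
  imports Defs
begin

locale pa_setting =
  fixes mul :: "'g::topological_space \<Rightarrow> 'g \<Rightarrow> 'g" and ginv :: "'g \<Rightarrow> 'g" and e :: 'g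
    and \<mu> :: "'g measure"
    and act :: "'g \<Rightarrow> 'b::topological_space \<Rightarrow> 'b" and X :: "'b set"
  assumes grp: "lch_group mul ginv e"
    and haar: "left_haar_measure mul \<mu>"
    and hausX: "Hausdorff_space (top_of_set X)" and lcX: "locally_compact_space (top_of_set X)"
    and gact: "global_action mul e act"
    and openX: "open X"
    and covX: "(\<Union>t. act t ` X) = UNIV"
    and proper: "proper_partial ginv act X"
begin

lemma assoc: "mul (mul a b) c = mul a (mul b c)"
  using grp unfolding lch_group_def by blast
lemma lid: "mul e a = a" and rid: "mul a e = a"
  using grp unfolding lch_group_def by blast+
lemma linv: "mul (ginv a) a = e" and rinv: "mul a (ginv a) = e"
  using grp unfolding lch_group_def by blast+
lemma ginv_ginv: "ginv (ginv a) = a"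
  by (metis assoc lid linv rid)
lemma cont_mul: "continuous_on UNIV (\<lambda>(a, b). mul a b)"
  using grp unfolding lch_group_def by blast
lemma cont_ginv: "continuous_on UNIV ginv"
  using grp unfolding lch_group_def by blast
lemma hausG: "Hausdorff_space (euclidean :: 'g topology)"
  using grp unfolding lch_group_def by blast

lemma act_e: "act e x = x" and act_mul: "act (mul s t) x = act s (act t x)"
  using gact unfolding global_action_def by blast+
lemma cont_act: "continuous_on UNIV (\<lambda>(t, x). act t x)"
  using gact unfolding global_action_def by blast
lemma act_inv1: "act (ginv s) (act s x) = x"
  by (metis act_e act_mul linv)
lemma act_inv2: "act s (act (ginv s) x) = x"
  by (metis act_e act_mul rinv)

lemma cont_act_s: "continuous_on UNIV (act s)"
proof -
  have "continuous_on UNIV (\<lambda>x. (\<lambda>(t, x). act t x) (s, x))"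
    by (rule continuous_on_compose2[OF cont_act]) (auto intro!: continuous_intros)
  then show ?thesis by simp
qed

lemma cont_orbit: "continuous_on UNIV (\<lambda>t. act (ginv t) x)"
proof -
  have "continuous_on UNIV (\<lambda>t. (\<lambda>(t, x). act t x) (ginv t, x))"
    by (rule continuous_on_compose2[OF cont_act])
       (auto intro!: continuous_intros continuous_on_compose2[OF cont_ginv])
  then show ?thesis by simp
qed

lemma cont_lmul: "continuous_on UNIV (mul s)"
proof -
  have "continuous_on UNIV (\<lambda>x. (\<lambda>(a, b). mul a b) (s, x))"
    by (rule continuous_on_compose2[OF cont_mul]) (auto intro!: continuous_intros)
  then show ?thesis by simp
qed

lemma cont_rmul: "continuous_on UNIV (\<lambda>x. mul x s)"
proof -
  have "continuous_on UNIV (\<lambda>x. (\<lambda>(a, b). mul a b) (x, s))"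
    by (rule continuous_on_compose2[OF cont_mul]) (auto intro!: continuous_intros)
  then show ?thesis by simp
qed

lemma open_act_image: assumes "open U" shows "open (act s ` U)"
proof -
  have "act s ` U = act (ginv s) -` U"
    by (auto simp: act_inv1 act_inv2 image_iff) (metis act_inv2)
  then show ?thesis using open_vimage[OF assms cont_act_s] by simp
qed

lemma closed_compactG: assumes "compact (T::'g set)" shows "closed T"
proof -
  have "closedin euclidean T"
    by (rule compactin_imp_closedin[OF hausG]) (simp add: compactin_euclidean_iff assms)
  then show ?thesis by (simp only: closed_closedin)
qed

lemma closed_singletonG: "closed {s::'g}"
proof -
  have "closedin euclidean {s}"
    using Hausdorff_imp_t1_space[OF hausG] unfolding t1_space_closedin_singleton by simp
  then show ?thesis by (simp only: closed_closedin)
qed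

lemma sets_mu: "sets \<mu> = sets borel"
  using haar unfolding left_haar_measure_def by (elim conjE) assumption

lemma haar_cpt: "\<forall>K. compact K \<longrightarrow> emeasure \<mu> K < \<infinity>"
  using haar unfolding left_haar_measure_def by (elim conjE) assumption

lemma compact_meas: assumes "compact T" shows "T \<in> sets \<mu>" "emeasure \<mu> T < \<infinity>"
  using sets_mu closed_compactG[OF assms] assms
    haar_cpt by auto

lemma haar_inv: "A \<in> sets borel \<Longrightarrow> emeasure \<mu> (mul g ` A) = emeasure \<mu> A"
proof -
  have "\<forall>g A. A \<in> sets borel \<longrightarrow> emeasure \<mu> (mul g ` A) = emeasure \<mu> A"
    using haar unfolding left_haar_measure_def by (elim conjE) assumption
  then show "A \<in> sets borel \<Longrightarrow> emeasure \<mu> (mul g ` A) = emeasure \<mu> A" by blast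
qed

lemma meas_lmul: assumes "compact T" shows "measure \<mu> (mul s ` T) = measure \<mu> T"
  using haar_inv[of T s] compact_meas[OF assms] sets_mu unfolding measure_def by auto

lemma properQ: assumes "compact C1" "compact C2" "C1 \<subseteq> X" "C2 \<subseteq> X"
  shows "compact {(t, x) \<in> pgraph ginv act X. (act t x, x) \<in> C1 \<times> C2}"
  using proper assms compact_Times[OF assms(1,2)] unfolding proper_partial_def by blast

lemma pgraph_mem: assumes "x \<in> X" "act t x \<in> X" shows "(t, x) \<in> pgraph ginv act X"
  using assms unfolding pgraph_def pdom_def by (auto simp: image_iff ginv_ginv) (metis act_inv1)

lemma compactP: assumes "compact C1" "compact C2" "C1 \<subseteq> X" "C2 \<subseteq> X"
  shows "compact {v. \<exists>c\<in>C2. act v c \<in> C1}"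
proof -
  have "{v. \<exists>c\<in>C2. act v c \<in> C1} = fst ` {(t, x) \<in> pgraph ginv act X. (act t x, x) \<in> C1 \<times> C2}"
    using assms(3,4) pgraph_mem by (auto simp: image_iff) blast
  then show ?thesis
    using compact_continuous_image[OF continuous_on_fst[OF continuous_on_id] properQ[OF assms]] by simp
qed

lemma lc_point: assumes "x0 \<in> X"
  obtains U C where "open U" "compact C" "x0 \<in> U" "U \<subseteq> C" "C \<subseteq> X"
proof -
  from lcX assms obtain U C where "openin (top_of_set X) U" "compactin (top_of_set X) C" "x0 \<in> U" "U \<subseteq> C"
    unfolding locally_compact_space_def by auto
  then show ?thesis
    using that openin_open_trans[OF _ openX] by (auto simp: compactin_subtopology compactin_euclidean_iff)
qed

lemma compact_fiber: assumes "compact K" "compact C" "K \<subseteq> X" "C \<subseteq> X"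
  shows "compact {c \<in> C. act s c \<in> K}"
proof -
  let ?Q = "{(t, x) \<in> pgraph ginv act X. (act t x, x) \<in> K \<times> C}"
  have "compact (?Q \<inter> ({s} \<times> UNIV))"
    by (rule compact_Int_closed[OF properQ[OF assms(1,2,3,4)]]) (intro closed_Times closed_singletonG closed_UNIV)
  then have "compact (snd ` (?Q \<inter> ({s} \<times> UNIV)))"
    by (rule compact_continuous_image[rotated]) (intro continuous_intros)
  moreover have "snd ` (?Q \<inter> ({s} \<times> UNIV)) = {c \<in> C. act s c \<in> K}"
  proof (intro equalityI subsetI)
    fix c assume "c \<in> snd ` (?Q \<inter> ({s} \<times> UNIV))"
    then show "c \<in> {c \<in> C. act s c \<in> K}" by force
  next
    fix c assume c: "c \<in> {c \<in> C. act s c \<in> K}"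
    then have "c \<in> X" "act s c \<in> X" using assms(3,4) by blast+
    then have "(s, c) \<in> pgraph ginv act X" by (rule pgraph_mem)
    then have "(s, c) \<in> ?Q \<inter> ({s} \<times> UNIV)" using c by simp
    then show "c \<in> snd ` (?Q \<inter> ({s} \<times> UNIV))" by (rule rev_image_eqI) simp
  qed
  ultimately show ?thesis by simp
qed

lemma closed_compactX: assumes "compact K" "K \<subseteq> X" shows "closed K"
  unfolding closed_def
proof (subst open_subopen, intro ballI)
  fix y assume "y \<in> - K"
  have "y \<in> (\<Union>t. act t ` X)" using covX by simp
  then obtain s x0 where x0: "x0 \<in> X" "y = act s x0" by blast
  obtain U C where UC: "open U" "compact C" "x0 \<in> U" "U \<subseteq> C" "C \<subseteq> X"
    using lc_point[OF x0(1)] by blast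
  let ?B = "{c \<in> C. act s c \<in> K}"
  have "compactin (top_of_set X) ?B"
    using compact_fiber[OF assms(1) UC(2) assms(2) UC(5)] UC(5)
    by (auto simp: compactin_subtopology compactin_euclidean_iff)
  then have "closedin (top_of_set X) ?B" by (rule compactin_imp_closedin[OF hausX])
  then have "openin (top_of_set X) (X - ?B)"
    unfolding closedin_def by simp
  then have oXB: "open (X - ?B)" by (rule openin_open_trans[OF _ openX])
  let ?V = "U \<inter> (X - ?B)"
  have "open (act s ` ?V)" by (rule open_act_image) (use oXB UC in auto)
  moreover have "y \<in> act s ` ?V" using x0 UC \<open>y \<in> - K\<close> by auto
  moreover have "act s ` ?V \<subseteq> - K" using UC by auto
  ultimately show "\<exists>T. open T \<and> y \<in> T \<and> T \<subseteq> - K" by blast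
qed

lemma ext_zero_Cc: assumes "h \<in> Cc_on X" shows "ext_zero X h \<in> Cc_on UNIV"
proof -
  obtain K where K: "compact K" "K \<subseteq> X" "\<forall>x\<in>X - K. h x = 0" and ch: "continuous_on X h"
    using assms unfolding Cc_on_def by blast
  have cK: "closed K" by (rule closed_compactX[OF K(1,2)])
  have "continuous_on X (ext_zero X h)"
    using ch by (rule continuous_on_cong[THEN iffD1, rotated 2]) (auto simp: ext_zero_def)
  moreover have "continuous_on (- K) (ext_zero X h)"
    by (rule continuous_on_cong[THEN iffD1, of _ _ "\<lambda>_. 0", rotated 2])
       (use K in \<open>auto simp: ext_zero_def\<close>)
  ultimately have "continuous_on (X \<union> - K) (ext_zero X h)"
    using continuous_on_open_Un openX cK by (metis open_Compl)
  moreover have "X \<union> - K = UNIV" using K by auto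
  ultimately show ?thesis unfolding Cc_on_def using K by (auto simp: ext_zero_def)
qed

lemma compact_cover: assumes "compact L"
  obtains F :: "('g \<times> 'b set) set" where "finite F" "\<forall>p\<in>F. compact (snd p) \<and> snd p \<subseteq> X"
    "L \<subseteq> (\<Union>p\<in>F. act (fst p) ` snd p)"
proof -
  let ?I = "{q. open (fst (snd q)) \<and> compact (snd (snd q)) \<and> fst (snd q) \<subseteq> snd (snd q) \<and> snd (snd q) \<subseteq> X}"
  let ?f = "\<lambda>q. act (fst q) ` fst (snd q)"
  have opn: "\<And>q. q \<in> ?I \<Longrightarrow> open (?f q)" by (auto intro: open_act_image)
  have cov: "L \<subseteq> \<Union> (?f ` ?I)"
  proof
    fix y assume "y \<in> L"
    have "y \<in> (\<Union>t. act t ` X)" using covX by simp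
    then obtain s x0 where x0: "x0 \<in> X" "y = act s x0" by blast
    obtain U C where UC: "open U" "compact C" "x0 \<in> U" "U \<subseteq> C" "C \<subseteq> X"
      using lc_point[OF x0(1)] by blast
    then have "(s, U, C) \<in> ?I" by simp
    moreover have "y \<in> ?f (s, U, C)" using x0 UC by simp
    ultimately show "y \<in> \<Union> (?f ` ?I)" by blast
  qed
  obtain C' where C': "C' \<subseteq> ?I" "finite C'" "L \<subseteq> \<Union> (?f ` C')"
    using compactE_image[OF assms opn cov] by blast
  let ?F = "(\<lambda>q. (fst q, snd (snd q))) ` C'"
  have "finite ?F" using C' by simp
  moreover have "\<forall>p\<in>?F. compact (snd p) \<and> snd p \<subseteq> X" using C'(1) by auto
  moreover have "L \<subseteq> (\<Union>p\<in>?F. act (fst p) ` snd p)"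
  proof
    fix y assume "y \<in> L"
    then obtain q where q: "q \<in> C'" "y \<in> ?f q" using C'(3) by blast
    then have "y \<in> act (fst q) ` snd (snd q)" using C'(1) by blast
    then show "y \<in> (\<Union>p\<in>?F. act (fst p) ` snd p)" using q(1) by force
  qed
  ultimately show ?thesis using that by blast
qed

lemma ginv_eq: "ginv (mul s (mul (mul (ginv s) (mul (ginv u) t)) (ginv t))) = u"
proof -
  have "mul s (mul (mul (ginv s) (mul (ginv u) t)) (ginv t)) = ginv u"
    by (simp add: assoc[symmetric] rinv lid rid) (simp add: assoc rinv rid)
  then show ?thesis by (simp add: ginv_ginv)
qed

lemma compactD: assumes "compact L"
  obtains D where "compact D" "{u. \<exists>l\<in>L. act (ginv u) l \<in> L} \<subseteq> D"
proof -
  obtain F where F: "finite F" "\<forall>p\<in>F. compact (snd p) \<and> snd p \<subseteq> X"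
    "L \<subseteq> (\<Union>p\<in>F. act (fst p) ` snd p)"
    using compact_cover[OF assms] by blast
  define P where "P p q = {v. \<exists>c\<in>snd q. act v c \<in> snd p}" for p q :: "'g \<times> 'b set"
  define \<phi> where "\<phi> p q v = ginv (mul (fst p) (mul v (ginv (fst q))))" for p q :: "'g \<times> 'b set" and v
  let ?D = "\<Union>p\<in>F. \<Union>q\<in>F. \<phi> p q ` P p q"
  have "compact ?D"
  proof (intro compact_UN F(1))
    fix p q assume "p \<in> F" "q \<in> F"
    then have "compact (P p q)" unfolding P_def using F(2) by (intro compactP) auto
    moreover have "continuous_on UNIV (\<phi> p q)"
      unfolding \<phi>_def
      by (intro continuous_on_compose2[OF cont_ginv _ subset_UNIV] continuous_on_compose2[OF cont_lmul _ subset_UNIV]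
        cont_rmul)
    ultimately show "compact (\<phi> p q ` P p q)"
      using compact_continuous_image continuous_on_subset by blast
  qed
  moreover have "{u. \<exists>l\<in>L. act (ginv u) l \<in> L} \<subseteq> ?D"
  proof
    fix u assume "u \<in> {u. \<exists>l\<in>L. act (ginv u) l \<in> L}"
    then obtain l where l: "l \<in> L" "act (ginv u) l \<in> L" by blast
    obtain q c where q: "q \<in> F" "c \<in> snd q" "l = act (fst q) c" using F(3) l(1) by blast
    obtain p c' where p: "p \<in> F" "c' \<in> snd p" "act (ginv u) l = act (fst p) c'" using F(3) l(2) by blast
    define v where "v = mul (ginv (fst p)) (mul (ginv u) (fst q))"
    have "act v c = c'" unfolding v_def using p(3) q(3) by (simp add: act_mul act_inv1)
    then have "v \<in> P p q" unfolding P_def using q(2) p(2) by blast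
    moreover have "\<phi> p q v = u" unfolding \<phi>_def v_def by (rule ginv_eq)
    ultimately show "u \<in> ?D" using p(1) q(1) by force
  qed
  ultimately show ?thesis using that by blast
qed

lemma inv_unique: "mul x y = e \<Longrightarrow> ginv x = y"
  by (metis assoc lid linv rid)

lemma ginv_mul: "ginv (mul a b) = mul (ginv b) (ginv a)"
  by (rule inv_unique) (metis assoc rid rinv)

lemma orbit_bound: assumes "compact L"
  obtains M where "M \<ge> 0" "\<And>x. \<exists>T. compact T \<and> {t. act (ginv t) x \<in> L} \<subseteq> T \<and> measure \<mu> T \<le> M"
proof -
  obtain D where D: "compact D" "{u. \<exists>l\<in>L. act (ginv u) l \<in> L} \<subseteq> D"
    using compactD[OF assms] by blast
  have "\<exists>T. compact T \<and> {t. act (ginv t) x \<in> L} \<subseteq> T \<and> measure \<mu> T \<le> measure \<mu> D" for x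
  proof (cases "\<exists>t0. act (ginv t0) x \<in> L")
    case False
    then show ?thesis by (intro exI[of _ "{}"]) auto
  next
    case True
    then obtain t0 where t0: "act (ginv t0) x \<in> L" by blast
    have "{t. act (ginv t) x \<in> L} \<subseteq> mul t0 ` D"
    proof
      fix t assume t: "t \<in> {t. act (ginv t) x \<in> L}"
      define u where "u = mul (ginv t0) t"
      have tu: "t = mul t0 u" unfolding u_def by (simp add: assoc[symmetric] rinv lid)
      have "act (ginv u) (act (ginv t0) x) = act (ginv t) x"
        unfolding u_def ginv_mul ginv_ginv act_mul[symmetric] by (simp add: assoc rinv rid)
      then have "u \<in> D" using D(2) t t0 by force
      then show "t \<in> mul t0 ` D" using tu by blast
    qed
    moreover have "compact (mul t0 ` D)"
      using compact_continuous_image[OF continuous_on_subset[OF cont_lmul subset_UNIV] D(1)] .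
    ultimately show ?thesis using meas_lmul[OF D(1)] by (intro exI[of _ "mul t0 ` D"]) auto
  qed
  then show ?thesis using that[of "measure \<mu> D"] by auto
qed

lemma int_dom: fixes F :: "'g \<Rightarrow> real"
  assumes "continuous_on UNIV F" "compact T" "\<And>t. \<bar>F t\<bar> \<le> c * indicator T t"
  shows "integrable \<mu> F" "integral\<^sup>L \<mu> F \<le> c * measure \<mu> T"
proof -
  have hb: "has_bochner_integral \<mu> (\<lambda>t. c * indicator T t) (c * measure \<mu> T)"
    by (rule has_bochner_integral_mult_right, rule has_bochner_integral_real_indicator)
       (use compact_meas[OF assms(2)] in auto)
  have ig: "integrable \<mu> (\<lambda>t. c * indicator T t)" using hb by (rule integrable.intros)
  have meas: "F \<in> borel_measurable \<mu>"
    by (subst measurable_cong_sets[OF sets_mu refl]) (rule borel_measurable_continuous_onI[OF assms(1)])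
  have "\<And>t. norm (F t) \<le> norm (c * indicator T t)"
    using assms(3) by (metis abs_ge_zero order_trans real_norm_def abs_of_nonneg)
  then show iF: "integrable \<mu> F"
    by (intro Bochner_Integration.integrable_bound[OF ig meas]) auto
  have "integral\<^sup>L \<mu> F \<le> integral\<^sup>L \<mu> (\<lambda>t. c * indicator T t)"
    by (rule integral_mono[OF iF ig]) (use assms(3) in \<open>metis abs_ge_self order_trans\<close>)
  moreover have "integral\<^sup>L \<mu> (\<lambda>t. c * indicator T t) = c * measure \<mu> T"
    by (rule has_bochner_integral_integral_eq[OF hb])
  ultimately show "integral\<^sup>L \<mu> F \<le> c * measure \<mu> T" by (simp only:)
qed

definition Jn :: "('b \<Rightarrow> complex) \<Rightarrow> 'b \<Rightarrow> real" where
  "Jn k x = (\<integral>t. (cmod (k (act (ginv t) x)))\<^sup>2 \<partial>\<mu>)"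

lemma Jn_nonneg: "0 \<le> Jn k x"
  unfolding Jn_def by (rule Bochner_Integration.integral_nonneg) simp

lemma E_inner_eq: "cmod (E_inner \<mu> ginv act k k x) = Jn k x"
proof -
  have "E_inner \<mu> ginv act k k x = (\<integral>t. complex_of_real ((cmod (k (act (ginv t) x)))\<^sup>2) \<partial>\<mu>)"
    unfolding E_inner_def complex_norm_square ..
  also have "\<dots> = complex_of_real (Jn k x)" unfolding Jn_def by (rule integral_complex_of_real)
  finally show ?thesis using Jn_nonneg[of k x] by simp
qed

lemma E_norm_eq: "E_norm \<mu> ginv act k = sqrt (SUP x. Jn k x)"
  unfolding E_norm_def E_inner_eq ..

lemma cont_orbit_k: assumes "continuous_on UNIV k"
  shows "continuous_on UNIV (\<lambda>t. (cmod (k (act (ginv t) x)))\<^sup>2)"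
  by (intro continuous_intros continuous_on_compose2[OF assms cont_orbit]) auto

lemma Cc_bound: assumes "continuous_on UNIV k" "compact L" "\<And>y. y \<notin> L \<Longrightarrow> k y = 0"
  obtains B where "\<And>x. integrable \<mu> (\<lambda>t. (cmod (k (act (ginv t) x)))\<^sup>2)" "\<And>x. Jn k x \<le> B"
proof -
  have "compact (k ` L)" by (rule compact_continuous_image[OF continuous_on_subset[OF assms(1) subset_UNIV] assms(2)])
  then obtain a where a: "\<forall>z\<in>k ` L. norm z \<le> a" using compact_imp_bounded bounded_iff by metis
  define Bk where "Bk = max a 0"
  have Bk: "cmod (k y) \<le> Bk" for y
    using a assms(3)[of y] unfolding Bk_def by (cases "y \<in> L") force+
  have Bk0: "0 \<le> Bk" unfolding Bk_def by simp
  obtain M where M: "M \<ge> 0" "\<And>x. \<exists>T. compact T \<and> {t. act (ginv t) x \<in> L} \<subseteq> T \<and> measure \<mu> T \<le> M"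
    using orbit_bound[OF assms(2)] by blast
  have *: "integrable \<mu> (\<lambda>t. (cmod (k (act (ginv t) x)))\<^sup>2) \<and> Jn k x \<le> Bk\<^sup>2 * M" for x
  proof -
    obtain T where T: "compact T" "{t. act (ginv t) x \<in> L} \<subseteq> T" "measure \<mu> T \<le> M" using M(2) by blast
    have dom: "\<bar>(cmod (k (act (ginv t) x)))\<^sup>2\<bar> \<le> Bk\<^sup>2 * indicator T t" for t
    proof (cases "t \<in> T")
      case True
      then show ?thesis using Bk[of "act (ginv t) x"] by (simp add: power_mono)
    next
      case False
      then show ?thesis using T(2) assms(3) by auto
    qed
    note I = int_dom[OF cont_orbit_k[OF assms(1)] T(1) dom]
    have "Bk\<^sup>2 * measure \<mu> T \<le> Bk\<^sup>2 * M" using T(3) by (simp add: mult_left_mono)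
    then show ?thesis using I unfolding Jn_def by simp
  qed
  show ?thesis using that * by blast
qed

lemma Cc_props: assumes "k \<in> Cc_on UNIV"
  obtains L where "continuous_on UNIV k" "compact L" "\<And>y. y \<notin> L \<Longrightarrow> k y = 0"
  using assms unfolding Cc_on_def by blast

lemma shrink_bound: fixes r d :: real assumes "d > 0" "r \<ge> 0"
  shows "r * (1 - min 1 (max 0 (r * (1/d) - 1))) \<le> 2 * d"
proof (cases "r \<le> 2 * d")
  case True
  have "0 \<le> 1 - min 1 (max 0 (r * (1/d) - 1))" "1 - min 1 (max 0 (r * (1/d) - 1)) \<le> 1" by auto
  then have "r * (1 - min 1 (max 0 (r * (1/d) - 1))) \<le> r * 1"
    using assms(2) by (intro mult_left_mono) auto
  then show ?thesis using True by simp
next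
  case False
  then have "r * (1/d) \<ge> 2" using assms(1) by (simp add: field_simps)
  then show ?thesis using assms by simp
qed

lemma diff_cc: fixes a b :: "'b \<Rightarrow> complex" assumes "continuous_on UNIV a" "continuous_on UNIV b"
  shows "continuous_on UNIV (a - b)"
  unfolding fun_diff_def by (intro continuous_on_diff assms)

lemma sq_tri: fixes a b :: complex shows "(cmod (a + b))\<^sup>2 \<le> 2 * (cmod a)\<^sup>2 + 2 * (cmod b)\<^sup>2"
proof -
  have "cmod (a + b) \<le> cmod a + cmod b" by (rule norm_triangle_ineq)
  then have "(cmod (a + b))\<^sup>2 \<le> (cmod a + cmod b)\<^sup>2" by (simp add: power_mono)
  also have "\<dots> \<le> 2 * (cmod a)\<^sup>2 + 2 * (cmod b)\<^sup>2"
    using sum_squares_ge_zero[of "cmod a - cmod b" 0] by (simp add: power2_eq_square algebra_simps)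
  finally show ?thesis .
qed

lemma approx:
  assumes g: "g \<in> Cc_on UNIV" and f: "f \<in> Cc_on UNIV" "f \<in> ext_zero X ` C0_on X"
    and eps: "\<epsilon> > 0" and close: "E_norm \<mu> ginv act (g - f) < \<epsilon>/2"
  shows "\<exists>h \<in> ext_zero X ` Cc_on X. E_norm \<mu> ginv act (g - h) < \<epsilon>"
proof -
  obtain Lg where Lg: "continuous_on UNIV g" "compact Lg" "\<And>y. y \<notin> Lg \<Longrightarrow> g y = 0"
    using Cc_props[OF g] by blast
  obtain Lf where Lf: "continuous_on UNIV f" "compact Lf" "\<And>y. y \<notin> Lf \<Longrightarrow> f y = 0"
    using Cc_props[OF f(1)] by blast
  obtain f0 where f0: "f0 \<in> C0_on X" "f = ext_zero X f0" using f(2) by blast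
  let ?L = "Lg \<union> Lf"
  have cL: "compact ?L" by (simp add: compact_Un Lg Lf)
  have gf_cont: "continuous_on UNIV (g - f)" by (rule diff_cc[OF Lg(1) Lf(1)])
  have gf0: "(g - f) y = 0" if "y \<notin> ?L" for y using that Lg(3) Lf(3) by simp
  obtain B1 where B1: "\<And>x. integrable \<mu> (\<lambda>t. (cmod ((g - f) (act (ginv t) x)))\<^sup>2)" "\<And>x. Jn (g - f) x \<le> B1"
    using Cc_bound[OF gf_cont cL gf0] by blast
  define S where "S = (SUP x. Jn (g - f) x)"
  have bdd: "bdd_above (range (Jn (g - f)))" by (rule bdd_aboveI[of _ B1]) (use B1(2) in auto)
  have JS: "Jn (g - f) x \<le> S" for x unfolding S_def by (rule cSUP_upper[OF UNIV_I bdd])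
  have "sqrt S < sqrt ((\<epsilon>/2)\<^sup>2)" using close eps unfolding E_norm_eq S_def[symmetric] by simp
  then have S4: "S < (\<epsilon>/2)\<^sup>2" by (simp only: real_sqrt_less_iff)
  obtain M where M: "M \<ge> 0" "\<And>x. \<exists>T. compact T \<and> {t. act (ginv t) x \<in> Lf} \<subseteq> T \<and> measure \<mu> T \<le> M"
    using orbit_bound[OF Lf(2)] by blast
  define \<delta> where "\<delta> = sqrt (\<epsilon>\<^sup>2 / (32 * (M + 1)))"
  have \<delta>0: "\<delta> > 0" using eps M by (simp add: \<delta>_def)
  have \<delta>2: "\<delta>\<^sup>2 = \<epsilon>\<^sup>2 / (32 * (M + 1))" using M unfolding \<delta>_def by simp
  define \<phi> where "\<phi> r = min 1 (max 0 (r * (1/\<delta>) - 1))" for r :: real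
  define H where "H y = f y * complex_of_real (\<phi> (cmod (f y)))" for y
  have Hcont: "continuous_on UNIV H" unfolding H_def \<phi>_def
    by (intro continuous_intros Lf(1))
  have Hdiff: "cmod (f y - H y) \<le> 2 * \<delta>" for y
  proof -
    have "f y - H y = f y * complex_of_real (1 - \<phi> (cmod (f y)))" by (simp add: H_def algebra_simps)
    moreover have "0 \<le> 1 - \<phi> (cmod (f y))" unfolding \<phi>_def by simp
    then have "cmod (complex_of_real (1 - \<phi> (cmod (f y)))) = 1 - \<phi> (cmod (f y))"
      by (simp only: norm_of_real abs_of_nonneg)
    ultimately have "cmod (f y - H y) = cmod (f y) * (1 - \<phi> (cmod (f y)))" by (simp only: norm_mult)
    then show ?thesis using shrink_bound[OF \<delta>0 norm_ge_zero, of "f y"] unfolding \<phi>_def by simp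
  qed
  have Hsmall: "H y = 0" if "cmod (f y) < \<delta>" for y
  proof -
    have "cmod (f y) * (1/\<delta>) < 1" using that \<delta>0 by (simp add: field_simps)
    then show ?thesis by (simp add: H_def \<phi>_def)
  qed
  have Hzero: "H y = 0" if "f y = 0" for y using that by (simp add: H_def)
  have HX: "H \<in> Cc_on X"
  proof -
    obtain K0 where K0: "compact K0" "K0 \<subseteq> X" "\<forall>x\<in>X - K0. cmod (f0 x) < \<delta>"
      using f0(1) \<delta>0 unfolding C0_on_def by blast
    have "\<forall>x\<in>X - K0. H x = 0"
      using K0(3) Hsmall f0(2) by (auto simp: ext_zero_def)
    then show ?thesis unfolding Cc_on_def using continuous_on_subset[OF Hcont subset_UNIV] K0(1,2) by blast
  qed
  have Heq: "ext_zero X H = H"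
  proof
    fix y show "ext_zero X H y = H y"
      using Hzero[of y] f0(2) by (cases "y \<in> X") (auto simp: ext_zero_def)
  qed
  have gH_cont: "continuous_on UNIV (g - H)" by (rule diff_cc[OF Lg(1) Hcont])
  have gH0: "(g - H) y = 0" if "y \<notin> ?L" for y using that Lg(3) Lf(3) Hzero by simp
  obtain B2 where B2: "\<And>x. integrable \<mu> (\<lambda>t. (cmod ((g - H) (act (ginv t) x)))\<^sup>2)"
    using Cc_bound[OF gH_cont cL gH0] by blast
  have fH_cont: "continuous_on UNIV (f - H)" by (rule diff_cc[OF Lf(1) Hcont])
  have key: "Jn (g - H) x \<le> 2 * S + 8 * \<delta>\<^sup>2 * M" for x
  proof -
    obtain T where T: "compact T" "{t. act (ginv t) x \<in> Lf} \<subseteq> T" "measure \<mu> T \<le> M"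
      using M(2) by blast
    have dom2: "\<bar>(cmod ((f - H) (act (ginv t) x)))\<^sup>2\<bar> \<le> (4 * \<delta>\<^sup>2) * indicator T t" for t
    proof (cases "t \<in> T")
      case True
      have "cmod ((f - H) (act (ginv t) x)) \<le> 2 * \<delta>" using Hdiff by simp
      then have "(cmod ((f - H) (act (ginv t) x)))\<^sup>2 \<le> (2 * \<delta>)\<^sup>2" by (rule power_mono[OF _ norm_ge_zero])
      then show ?thesis using True by (simp add: power_mult_distrib)
    next
      case False
      then have "f (act (ginv t) x) = 0" using T(2) Lf(3) by blast
      then show ?thesis using False Hzero by simp
    qed
    note I2 = int_dom[OF cont_orbit_k[OF fH_cont] T(1) dom2]
    have pw: "(cmod ((g - H) z))\<^sup>2 \<le> 2 * (cmod ((g - f) z))\<^sup>2 + 2 * (cmod ((f - H) z))\<^sup>2" for z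
    proof -
      have "(g - H) z = (g - f) z + (f - H) z" by simp
      then show ?thesis using sq_tri[of "(g - f) z" "(f - H) z"] by simp
    qed
    have int2: "integrable \<mu> (\<lambda>t. 2 * (cmod ((g - f) (act (ginv t) x)))\<^sup>2 + 2 * (cmod ((f - H) (act (ginv t) x)))\<^sup>2)"
      using B1(1) I2(1) by (intro Bochner_Integration.integrable_add integrable_mult_right)
    have "Jn (g - H) x \<le> (\<integral>t. 2 * (cmod ((g - f) (act (ginv t) x)))\<^sup>2 + 2 * (cmod ((f - H) (act (ginv t) x)))\<^sup>2 \<partial>\<mu>)"
      unfolding Jn_def by (rule integral_mono[OF B2 int2 pw])
    also have "\<dots> = 2 * Jn (g - f) x + 2 * (\<integral>t. (cmod ((f - H) (act (ginv t) x)))\<^sup>2 \<partial>\<mu>)"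
      unfolding Jn_def using B1(1) I2(1) by (simp add: Bochner_Integration.integral_add)
    also have "\<dots> \<le> 2 * S + 2 * (4 * \<delta>\<^sup>2 * M)"
    proof -
      have "4 * \<delta>\<^sup>2 * measure \<mu> T \<le> 4 * \<delta>\<^sup>2 * M" using T(3) by (simp add: mult_left_mono)
      then show ?thesis using I2(2) JS[of x] by simp
    qed
    finally show ?thesis by simp
  qed
  have R: "2 * S + 8 * \<delta>\<^sup>2 * M < \<epsilon>\<^sup>2"
  proof -
    have "8 * \<delta>\<^sup>2 * M = \<epsilon>\<^sup>2 * (M / (4 * (M + 1)))" unfolding \<delta>2 using M(1) by (simp add: field_simps)
    also have "\<dots> \<le> \<epsilon>\<^sup>2 * (1/4)"
      using M(1) by (intro mult_left_mono) (simp_all add: field_simps)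
    finally have A: "8 * \<delta>\<^sup>2 * M \<le> \<epsilon>\<^sup>2 / 4" by simp
    have B: "S < \<epsilon>\<^sup>2 / 4" using S4 by (simp add: power_divide)
    have "0 < \<epsilon>\<^sup>2" using eps by simp
    then show ?thesis using A B by linarith
  qed
  have "(SUP x. Jn (g - H) x) \<le> 2 * S + 8 * \<delta>\<^sup>2 * M" by (rule cSUP_least) (simp_all add: key)
  then have "E_norm \<mu> ginv act (g - H) \<le> sqrt (2 * S + 8 * \<delta>\<^sup>2 * M)"
    unfolding E_norm_eq by (rule real_sqrt_le_mono)
  also have "\<dots> < sqrt (\<epsilon>\<^sup>2)" using R by (simp only: real_sqrt_less_iff)
  also have "\<dots> = \<epsilon>" using eps by simp
  finally have "E_norm \<mu> ginv act (g - H) < \<epsilon>" .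
  moreover have "H \<in> ext_zero X ` Cc_on X" using HX Heq by (metis image_eqI)
  ultimately show ?thesis by blast
qed

lemma Cc_C0: "Cc_on X \<subseteq> C0_on X"
  unfolding Cc_on_def C0_on_def by fastforce

lemma E_closure_mono: "S1 \<subseteq> S2 \<Longrightarrow> E_closure \<mu> ginv act S1 \<subseteq> E_closure \<mu> ginv act S2"
  unfolding E_closure_def by blast

lemma main_eq: "E_closure \<mu> ginv act (ext_zero X ` Cc_on X)
       = E_closure \<mu> ginv act (Cc_on UNIV \<inter> ext_zero X ` C0_on X)"
proof
  show "E_closure \<mu> ginv act (ext_zero X ` Cc_on X) \<subseteq> E_closure \<mu> ginv act (Cc_on UNIV \<inter> ext_zero X ` C0_on X)"
    by (rule E_closure_mono) (use ext_zero_Cc Cc_C0 in blast)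
next
  show "E_closure \<mu> ginv act (Cc_on UNIV \<inter> ext_zero X ` C0_on X) \<subseteq> E_closure \<mu> ginv act (ext_zero X ` Cc_on X)"
  proof
    fix g assume g: "g \<in> E_closure \<mu> ginv act (Cc_on UNIV \<inter> ext_zero X ` C0_on X)"
    then have gC: "g \<in> Cc_on UNIV" unfolding E_closure_def by blast
    have "\<exists>h \<in> ext_zero X ` Cc_on X. E_norm \<mu> ginv act (g - h) < \<epsilon>" if eps: "\<epsilon> > 0" for \<epsilon>
    proof -
      have all: "\<forall>\<epsilon>>0. \<exists>f \<in> Cc_on UNIV \<inter> ext_zero X ` C0_on X. E_norm \<mu> ginv act (g - f) < \<epsilon>"
        using g unfolding E_closure_def by simp
      have "\<epsilon>/2 > 0" using eps by simp
      with all obtain f where f: "f \<in> Cc_on UNIV \<inter> ext_zero X ` C0_on X" "E_norm \<mu> ginv act (g - f) < \<epsilon>/2"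
        by blast
      show ?thesis using approx[OF gC _ _ eps f(2)] f(1) by blast
    qed
    then show "g \<in> E_closure \<mu> ginv act (ext_zero X ` Cc_on X)" unfolding E_closure_def using gC by blast
  qed
qed

end

theorem proposition3p1:
  fixes mul :: "'g::topological_space \<Rightarrow> 'g \<Rightarrow> 'g" and ginv :: "'g \<Rightarrow> 'g" and e :: 'g
    and \<mu> :: "'g measure"
    and act :: "'g \<Rightarrow> 'b::topological_space \<Rightarrow> 'b" and X :: "'b set"
  assumes "lch_group mul ginv e"
    and "left_haar_measure mul \<mu>"
    and "Hausdorff_space (top_of_set X)" and "locally_compact_space (top_of_set X)"
    and "global_action mul e act"
    and "open X"
    and "(\<Union>t. act t ` X) = UNIV"
    and "proper_partial ginv act X"
  shows "E_closure \<mu> ginv act (ext_zero X ` Cc_on X)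
       = E_closure \<mu> ginv act (Cc_on UNIV \<inter> ext_zero X ` C0_on X)"
proof -
  interpret pa_setting mul ginv e \<mu> act X
    using assms by (unfold_locales) blast+
  show ?thesis by (rule main_eq)
qed

end
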